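(* Let $\mathfrak{M}=\{M^{(\alpha)}:\alpha>0\}$ be a non-quasianalytic weight matrix of R-moderate growth. Then $\mathfrak{K}=\mathfrak{K}(\mathfrak{M})$ has R-moderate growth, and this property of $\mathfrak{K}$ is equivalent to \[ \forall\alpha>0\ \exists\beta>0\ \exists H\ge1\ \forall t\ge0:\ 2\kappa_\beta(t)\le\kappa_\alpha(Ht)+H; \] in particular the latter condition holds.
   Context: A weight sequence is $M=(M_k)_{k\ge0}$ with $M_k=\mu_0\cdots\mu_k$, $1=\mu_0\le\mu_1\le\cdots$, $\mu_k\to\infty$; non-quasianalytic if $\sum_k1/\mu_k<\infty$. A weight matrix is a family $\{M^{(\alpha)}:\alpha>0\}$ of weight sequences with $M^{(\alpha)}\le M^{(\beta)}$ for $\alpha\le\beta$; non-quasianalytic if all members are; it has R-moderate growth if for every $M$ in it there are $N$ in it and $C\ge1$ with $M_{j+k}\le C^{j+k}N_jN_k$ for all $j,k\in\mathbb{N}$. Associated function $\omega_M(t)=\sup_k\log(t^kM_0/M_k)$, $\omega_M(0)=0$; $\widetilde\omega_M(t)=\omega_M(t)+\log(1+t^2)$. For non-quasianalytic pre-weight $\omega$: $\kappa_\omega(t)=\int_1^\infty\omega(ts)s^{-2}ds$, $\varphi^*_\omega(x)=\sup_{y\ge0}(xy-\omega(e^y))$. Here $\kappa_\alpha:=\kappa_{\widetilde\omega_{M^{(\alpha)}}}$ and $K^{(\alpha)}_j=\exp(\varphi^*_{\kappa_\alpha}(j))$ (with $\kappa_\alpha$ replaced by an equivalent normalized function, i.e.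 vanishing on $[0,1]$), $\mathfrak{K}(\mathfrak{M})=\{K^{(\alpha)}\}$. *)

theory Defs
  imports "HOL-Analysis.Analysis"
begin

definition weight_seq :: "(nat \<Rightarrow> real) \<Rightarrow> bool" where
  "weight_seq M \<longleftrightarrow> (\<exists>mu::nat \<Rightarrow> real. mu 0 = 1 \<and> mono mu \<and> filterlim mu at_top sequentially
      \<and> (\<forall>k. M k = (\<Prod>i\<le>k. mu i)))"

definition quot_seq :: "(nat \<Rightarrow> real) \<Rightarrow> nat \<Rightarrow> real" where
  "quot_seq M k = (if k = 0 then 1 else M k / M (k - 1))"

definition nonquasianalytic_seq :: "(nat \<Rightarrow> real) \<Rightarrow> bool" where
  "nonquasianalytic_seq M \<longleftrightarrow> weight_seq M \<and> summable (\<lambda>k. 1 / quot_seq M k)"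

definition weight_matrix :: "(real \<Rightarrow> nat \<Rightarrow> real) \<Rightarrow> bool" where
  "weight_matrix MM \<longleftrightarrow> (\<forall>a>0. weight_seq (MM a)) \<and>
      (\<forall>a b. 0 < a \<longrightarrow> a \<le> b \<longrightarrow> (\<forall>k. MM a k \<le> MM b k))"

definition nonquasianalytic_matrix :: "(real \<Rightarrow> nat \<Rightarrow> real) \<Rightarrow> bool" where
  "nonquasianalytic_matrix MM \<longleftrightarrow> weight_matrix MM \<and> (\<forall>a>0. nonquasianalytic_seq (MM a))"

definition R_moderate :: "(real \<Rightarrow> nat \<Rightarrow> real) \<Rightarrow> bool" where
  "R_moderate MM \<longleftrightarrow> (\<forall>a>0. \<exists>b>0. \<exists>C\<ge>1. \<forall>j k.
      MM a (j + k) \<le> C ^ (j + k) * MM b j * MM b k)"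

definition assoc_fun :: "(nat \<Rightarrow> real) \<Rightarrow> real \<Rightarrow> real" where
  "assoc_fun M t = (if t \<le> 0 then 0 else (SUP k. ln (t ^ k * M 0 / M k)))"

definition assoc_fun_tilde :: "(nat \<Rightarrow> real) \<Rightarrow> real \<Rightarrow> real" where
  "assoc_fun_tilde M t = assoc_fun M t + ln (1 + t\<^sup>2)"

definition kappa :: "(real \<Rightarrow> real) \<Rightarrow> real \<Rightarrow> real" where
  "kappa \<omega> t = (LINT s:{1..}|lborel. \<omega> (t * s) / s\<^sup>2)"

text \<open>Normalized version of kappa (vanishing on [0,1], differing from kappa by a bounded function):
  max 0 (kappa t - kappa 1).\<close>
definition kappa_norm :: "(real \<Rightarrow> real) \<Rightarrow> real \<Rightarrow> real" where
  "kappa_norm \<omega> t = max 0 (kappa \<omega> t - kappa \<omega> 1)"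

definition young_conj :: "(real \<Rightarrow> real) \<Rightarrow> real \<Rightarrow> real" where
  "young_conj \<omega> x = (SUP y\<in>{0..}. x * y - \<omega> (exp y))"

definition kappa_mat :: "(real \<Rightarrow> nat \<Rightarrow> real) \<Rightarrow> real \<Rightarrow> real \<Rightarrow> real" where
  "kappa_mat MM a = kappa (assoc_fun_tilde (MM a))"

definition K_mat :: "(real \<Rightarrow> nat \<Rightarrow> real) \<Rightarrow> real \<Rightarrow> nat \<Rightarrow> real" where
  "K_mat MM a j = exp (young_conj (kappa_norm (assoc_fun_tilde (MM a))) (real j))"

end

theory Submission
  imports Defs
begin

lemma ws_basic:
  assumes "weight_seq M"
  shows "quot_seq M 0 = 1" "mono (quot_seq M)" "\<And>k. quot_seq M k \<ge> 1"
        "\<And>k. M k = (\<Prod>i\<le>k. quot_seq M i)" "\<And>k. M k > 0" "M 0 = 1"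
        "filterlim (quot_seq M) at_top sequentially"
        "\<And>k. M (Suc k) = M k * quot_seq M (Suc k)"
proof -
  obtain mu where mu: "mu 0 = 1" "mono mu" "filterlim mu at_top sequentially"
      "\<And>k. M k = (\<Prod>i\<le>k. mu i)"
    using assms unfolding weight_seq_def by blast
  have mu1: "mu k \<ge> 1" for k using mu(1,2) by (metis le0 monoD)
  have Mpos: "M k > 0" for k using mu1 mu(4) by (simp add: prod_pos less_le_trans[OF zero_less_one])
  have q: "quot_seq M = mu"
  proof
    fix k show "quot_seq M k = mu k"
    proof (cases k)
      case 0 then show ?thesis by (simp add: quot_seq_def mu(1))
    next
      case (Suc n)
      have "M (Suc n) = M n * mu (Suc n)" using mu(4) by simp
      then show ?thesis using Suc Mpos[of n] by (simp add: quot_seq_def)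
    qed
  qed
  show "quot_seq M 0 = 1" "mono (quot_seq M)" "\<And>k. quot_seq M k \<ge> 1"
        "\<And>k. M k = (\<Prod>i\<le>k. quot_seq M i)" "\<And>k. M k > 0" "M 0 = 1"
        "filterlim (quot_seq M) at_top sequentially"
        "\<And>k. M (Suc k) = M k * quot_seq M (Suc k)"
    using q mu mu1 Mpos by auto
qed

lemma ln_term:
  assumes "weight_seq M" "t > 0"
  shows "ln (t ^ k * M 0 / M k) = (\<Sum>i<k. ln (t / quot_seq M (Suc i)))"
proof (induction k)
  case 0 then show ?case using ws_basic[OF assms(1)] by simp
next
  case (Suc k)
  have p: "M k > 0" "quot_seq M (Suc k) > 0" using ws_basic[OF assms(1)]
    by (auto intro: less_le_trans[OF zero_less_one])
  have "t ^ Suc k * M 0 / M (Suc k) = (t ^ k * M 0 / M k) * (t / quot_seq M (Suc k))"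
    using ws_basic(8)[OF assms(1), of k] p by (simp add: field_simps)
  then have "ln (t ^ Suc k * M 0 / M (Suc k)) = ln (t ^ k * M 0 / M k) + ln (t / quot_seq M (Suc k))"
  proof -
    have "ln ((t ^ k * M 0 / M k) * (t / quot_seq M (Suc k))) = ln (t ^ k * M 0 / M k) + ln (t / quot_seq M (Suc k))"
      using p assms(2) ws_basic(5,6)[OF assms(1)] by (intro ln_mult_pos) auto
    then show ?thesis using \<open>t ^ Suc k * M 0 / M (Suc k) = _\<close> by simp
  qed
  then show ?case using Suc by simp
qed

definition fterm :: "(nat \<Rightarrow> real) \<Rightarrow> real \<Rightarrow> nat \<Rightarrow> real" where
  "fterm M t i = max 0 (ln (t / quot_seq M (Suc i)))"

lemma fterm_summable:
  assumes "weight_seq M" "t > 0"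
  shows "summable (fterm M t)"
proof -
  have "eventually (\<lambda>i. quot_seq M i \<ge> t) sequentially"
    using ws_basic(7)[OF assms(1)] by (simp add: filterlim_at_top)
  then obtain N where N: "\<And>i. i \<ge> N \<Longrightarrow> quot_seq M i \<ge> t" by (auto simp: eventually_sequentially)
  show ?thesis
  proof (rule summable_finite[of "{..<N}"])
    fix n assume "n \<notin> {..<N}"
    then have "quot_seq M (Suc n) \<ge> t" using N by simp
    moreover have "quot_seq M (Suc n) > 0" using ws_basic(3)[OF assms(1), of "Suc n"] by linarith
    ultimately have "t / quot_seq M (Suc n) \<le> 1" by simp
    then have "ln (t / quot_seq M (Suc n)) \<le> 0" using assms(2) \<open>quot_seq M (Suc n) > 0\<close> by simp
    then show "fterm M t n = 0" by (simp add: fterm_def)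
  qed simp
qed

lemma term_le_suminf:
  assumes "weight_seq M" "t > 0"
  shows "ln (t ^ k * M 0 / M k) \<le> suminf (fterm M t)"
proof -
  have "ln (t ^ k * M 0 / M k) \<le> (\<Sum>i<k. fterm M t i)"
    unfolding ln_term[OF assms] fterm_def by (intro sum_mono) simp
  also have "\<dots> \<le> suminf (fterm M t)"
    by (rule sum_le_suminf[OF fterm_summable[OF assms]]) (auto simp: fterm_def)
  finally show ?thesis .
qed

lemma omega_bdd:
  assumes "weight_seq M" "t > 0"
  shows "bdd_above (range (\<lambda>k. ln (t ^ k * M 0 / M k)))"
  using term_le_suminf[OF assms] by (intro bdd_aboveI2) auto

lemma omega_le_suminf:
  assumes "weight_seq M" "t > 0"
  shows "assoc_fun M t \<le> suminf (fterm M t)"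
  using assms term_le_suminf[OF assms] unfolding assoc_fun_def by (auto intro: cSUP_least)

lemma omega_ge:
  assumes "weight_seq M" "t > 0"
  shows "ln (t ^ k * M 0 / M k) \<le> assoc_fun M t"
  using assms cSUP_upper[OF _ omega_bdd[OF assms], of k] unfolding assoc_fun_def by auto

lemma omega_nonneg:
  assumes "weight_seq M"
  shows "assoc_fun M t \<ge> 0"
proof (cases "t > 0")
  case True
  from omega_ge[OF assms True, of 0] show ?thesis using ws_basic(5)[OF assms, of 0] by simp
qed (simp add: assoc_fun_def)

lemma omega_zero[simp]: "assoc_fun M 0 = 0"
  by (simp add: assoc_fun_def)

lemma omega_mono:
  assumes "weight_seq M"
  shows "mono (assoc_fun M)"
proof (rule monoI)
  fix x y :: real assume xy: "x \<le> y"
  show "assoc_fun M x \<le> assoc_fun M y"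
  proof (cases "x > 0")
    case False then show ?thesis using omega_nonneg[OF assms, of y] by (simp add: assoc_fun_def)
  next
    case True
    then have y: "y > 0" using xy by simp
    have "ln (x ^ k * M 0 / M k) \<le> assoc_fun M y" for k
    proof -
      have "ln (x ^ k * M 0 / M k) \<le> ln (y ^ k * M 0 / M k)"
        using True xy ws_basic(5)[OF assms, of k] ws_basic(6)[OF assms]
        by (subst ln_le_cancel_iff) (auto intro!: divide_right_mono mult_right_mono power_mono)
      also have "\<dots> \<le> assoc_fun M y" by (rule omega_ge[OF assms y])
      finally show ?thesis .
    qed
    then show ?thesis using True unfolding assoc_fun_def[of M x] by (auto intro: cSUP_least)
  qed
qed

lemma omega_moderate:
  assumes M: "weight_seq M" and N: "weight_seq N" and C: "C \<ge> 1"
    and mod: "\<And>j k. M (j + k) \<le> C ^ (j + k) * N j * N k" and t: "t \<ge> 0"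
  shows "2 * assoc_fun N t \<le> assoc_fun M (C * t)"
proof (cases "t = 0")
  case True then show ?thesis by simp
next
  case False
  then have t: "t > 0" using t by simp
  have Ct: "C * t > 0" using C t by simp
  have key: "ln (t ^ j * N 0 / N j) + ln (t ^ k * N 0 / N k) \<le> assoc_fun M (C * t)" for j k
  proof -
    have Np: "N j > 0" "N k > 0" "M (j+k) > 0" using ws_basic(5)[OF N] ws_basic(5)[OF M] by auto
    have "ln (t ^ j * N 0 / N j) + ln (t ^ k * N 0 / N k) = ln (t ^ (j+k) / (N j * N k))"
      using Np t ws_basic(6)[OF N] by (simp add: ln_mult ln_div power_add)
    also have "\<dots> \<le> ln ((C*t) ^ (j+k) * M 0 / M (j+k))"
    proof (subst ln_le_cancel_iff)
      show "t ^ (j + k) / (N j * N k) \<le> (C * t) ^ (j + k) * M 0 / M (j + k)"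
        using Np t mod[of j k] ws_basic(6)[OF M]
        by (simp add: field_simps power_mult_distrib mult_left_mono)
    qed (use Np t C ws_basic(6)[OF M] in auto)
    also have "\<dots> \<le> assoc_fun M (C * t)" by (rule omega_ge[OF M Ct])
    finally show ?thesis .
  qed
  have aN: "assoc_fun N t = (SUP k. ln (t ^ k * N 0 / N k))" using t by (simp add: assoc_fun_def)
  have "ln (t ^ k * N 0 / N k) \<le> assoc_fun M (C * t) - assoc_fun N t" for k
  proof -
    have "assoc_fun N t \<le> assoc_fun M (C * t) - ln (t ^ k * N 0 / N k)"
      unfolding aN by (rule cSUP_least) (use key[of _ k] in \<open>auto simp: algebra_simps\<close>)
    then show ?thesis by simp
  qed
  then have "(SUP k. ln (t ^ k * N 0 / N k)) \<le> assoc_fun M (C * t) - assoc_fun N t"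
    by (intro cSUP_least) auto
  then have "assoc_fun N t \<le> assoc_fun M (C * t) - assoc_fun N t" using aN by simp
  then show ?thesis by simp
qed

lemma omega_log:
  assumes M: "weight_seq M" and t: "t \<ge> 0"
  shows "ln (1 + t\<^sup>2) \<le> 2 * assoc_fun M t + ln 2 + 2 * ln (M 1)"
proof -
  have M1: "M 1 \<ge> 1" using ws_basic(8)[OF M, of 0] ws_basic(3)[OF M, of 1] ws_basic(6)[OF M] by simp
  then have lM1: "ln (M 1) \<ge> 0" by simp
  show ?thesis
  proof (cases "t \<le> 1")
    case True
    have "t\<^sup>2 \<le> 1" using True t by (simp add: power_le_one)
    then have "ln (1 + t\<^sup>2) \<le> ln 2" by (subst ln_le_cancel_iff) (auto intro: add_pos_nonneg)
    then show ?thesis using omega_nonneg[OF M, of t] lM1 by linarith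
  next
    case False
    then have t1: "t > 1" by simp
    have "ln (t ^ 1 * M 0 / M 1) \<le> assoc_fun M t" using omega_ge[OF M, of t 1] t1 by simp
    then have a: "ln t - ln (M 1) \<le> assoc_fun M t" using ws_basic(6)[OF M] M1 t1 by (simp add: ln_div)
    have "1 \<le> t * t" using t1 by (metis less_imp_le mult_mono' mult_1 zero_le_one)
    then have "1 + t\<^sup>2 \<le> 2 * t\<^sup>2" by (simp add: power2_eq_square)
    then have "ln (1 + t\<^sup>2) \<le> ln (2 * t\<^sup>2)" using t1 by (subst ln_le_cancel_iff) (auto intro: add_pos_nonneg)
    also have "\<dots> = ln 2 + 2 * ln t" using t1 by (simp add: ln_mult ln_realpow)
    finally show ?thesis using a by linarith
  qed
qed


lemma sqrt_powr32: "s > 0 \<Longrightarrow> s powr (-3/2) = sqrt s / s^2"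
proof -
  assume s: "s > 0"
  have "s powr (-3/2) = s powr (1/2 - 2)" by simp
  also have "\<dots> = s powr (1/2) / s powr 2" by (rule powr_diff)
  also have "\<dots> = sqrt s / s^2" using s by (simp add: powr_half_sqrt)
  finally show ?thesis .
qed

lemma nn_tail:
  assumes c: "c > 0" and A: "A \<ge> 0"
  shows "(\<integral>\<^sup>+ s. ennreal (indicator {c..} s * (A * (sqrt s / s^2))) \<partial>lborel) = ennreal (2 * A / sqrt c)"
proof -
  have "((\<lambda>x. x powr (-3/2)) has_integral -(c powr (-3/2+1)) / (-3/2+1)) {c..}"
    using has_integral_powr_to_inf[of "-3/2" c] c by simp
  moreover have "-(c powr (-3/2+1)) / (-3/2+1) = 2 / sqrt c"
    using c by (simp add: powr_minus_divide powr_half_sqrt)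
  ultimately have "((\<lambda>x. x powr (-3/2)) has_integral 2 / sqrt c) {c..}" by simp
  then have "((\<lambda>x. sqrt x / x^2) has_integral 2 / sqrt c) {c..}"
    by (rule has_integral_cong[THEN iffD1, rotated]) (use c sqrt_powr32 in auto)
  then have "((\<lambda>x. A * (sqrt x / x^2)) has_integral A * (2 / sqrt c)) {c..}"
    by (rule has_integral_mult_right)
  from nn_integral_has_integral_lebesgue[OF _ this] show ?thesis
    using c A by simp
qed

lemma ln_le_sqrt: "x > 0 \<Longrightarrow> ln x \<le> 2 * sqrt x"
proof -
  assume x: "x > 0"
  have "ln x = 2 * ln (sqrt x)" using x by (simp add: ln_sqrt)
  also have "\<dots> \<le> 2 * (sqrt x - 1)" using ln_le_minus_one[of "sqrt x"] x by simp
  finally show ?thesis by simp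
qed

lemma fterm_bound:
  assumes M: "weight_seq M" and u: "u > 0" and s: "s > 0"
  shows "fterm M (u * s) i / s^2 \<le> indicator {(quot_seq M (Suc i) / u)..} s * (2 * sqrt (u / quot_seq M (Suc i)) * (sqrt s / s^2))"
proof -
  define m where "m = quot_seq M (Suc i)"
  have m: "m \<ge> 1" using ws_basic(3)[OF M] m_def by simp
  show ?thesis
  proof (cases "s < m / u")
    case True
    then have "u * s < m" using u by (simp add: field_simps)
    then have "u * s / m < 1" using m by simp
    then have "ln (u * s / m) \<le> 0" using u s m by simp
    then have "fterm M (u * s) i = 0" by (simp add: fterm_def m_def)
    then show ?thesis using True m_def by simp
  next
    case False
    have "fterm M (u * s) i \<le> 2 * sqrt (u * s / m)"
      using ln_le_sqrt[of "u * s / m"] u s m by (simp add: fterm_def m_def[symmetric])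
    also have "\<dots> = 2 * sqrt (u / m) * sqrt s"
    proof -
      have "u * s / m = (u / m) * s" by simp
      then show ?thesis by (simp only: real_sqrt_mult)
    qed
    finally have "fterm M (u * s) i / s^2 \<le> 2 * sqrt (u / m) * sqrt s / s^2"
      by (simp add: divide_right_mono)
    then show ?thesis using False m_def by simp
  qed
qed

lemma log_bound:
  assumes u: "u > 0" and s: "s \<ge> 1"
  shows "ln (1 + (u * s)^2) / s^2 \<le> indicator {1..} s * ((ln 2 + 4 * sqrt u) * (sqrt s / s^2))"
proof -
  define x where "x = u * s"
  have x: "x > 0" using u s x_def by simp
  have lx: "ln (1 + x^2) \<le> ln 2 + 4 * sqrt x"
  proof (cases "x \<le> 1")
    case True
    have "x^2 \<le> 1" using True x by (simp add: power_le_one)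
    then have "ln (1 + x^2) \<le> ln 2" by (subst ln_le_cancel_iff) (auto intro: add_pos_nonneg)
    then show ?thesis using real_sqrt_ge_zero[of x] x by linarith
  next
    case False
    have "1 \<le> x * x" using False by (metis less_imp_le mult_mono' mult_1 zero_le_one not_le)
    then have "1 + x^2 \<le> 2 * x^2" by (simp add: power2_eq_square)
    then have "ln (1 + x^2) \<le> ln (2 * x^2)" using x by (subst ln_le_cancel_iff) (auto intro: add_pos_nonneg)
    also have "\<dots> = ln 2 + 2 * ln x" using x by (simp add: ln_mult ln_realpow)
    finally show ?thesis using ln_le_sqrt[OF x] by linarith
  qed
  have h1: "ln 2 \<le> ln 2 * sqrt s" using s by simp
  have h2: "sqrt x = sqrt u * sqrt s" by (simp add: x_def real_sqrt_mult)
  have h3: "(ln 2 + 4 * sqrt u) * sqrt s = ln 2 * sqrt s + 4 * (sqrt u * sqrt s)" by (simp add: algebra_simps)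
  have "ln (1 + x^2) \<le> (ln 2 + 4 * sqrt u) * sqrt s" unfolding h3 using lx h1 h2 by linarith
  then have "ln (1 + x^2) / s^2 \<le> (ln 2 + 4 * sqrt u) * sqrt s / s^2" by (simp add: divide_right_mono)
  then show ?thesis using s x_def by simp
qed

lemma omega_meas [measurable]:
  assumes "weight_seq M"
  shows "assoc_fun M \<in> borel_measurable borel"
  by (rule borel_measurable_mono[OF omega_mono[OF assms]])

lemma test_meas:
  assumes "weight_seq M"
  shows "(\<lambda>s. indicator {1..} s * (assoc_fun_tilde M (u * s) / s^2)) \<in> borel_measurable lborel"
  unfolding assoc_fun_tilde_def using assms by measurable


lemma nq_basic:
  assumes "nonquasianalytic_seq M"
  shows "weight_seq M" "summable (\<lambda>i. 1 / quot_seq M (Suc i))"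
  using assms summable_Suc_iff[where f="\<lambda>k. 1 / quot_seq M k"] unfolding nonquasianalytic_seq_def by auto

lemma omega_tilde_zero[simp]: "assoc_fun_tilde M 0 = 0"
  by (simp add: assoc_fun_tilde_def)

lemma omega_tilde_nonneg: "weight_seq M \<Longrightarrow> assoc_fun_tilde M t \<ge> 0"
  using omega_nonneg[of M t] by (simp add: assoc_fun_tilde_def)

lemma kappa_integrable:
  assumes NQ: "nonquasianalytic_seq M" and u: "u \<ge> 0"
  shows "set_integrable lborel {1..} (\<lambda>s. assoc_fun_tilde M (u * s) / s^2)"
proof (cases "u = 0")
  case True then show ?thesis by (simp add: set_integrable_def)
next
  case False
  then have u: "u > 0" using u by simp
  note M = nq_basic(1)[OF NQ]
  define m where "m i = quot_seq M (Suc i)" for i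
  have m1: "m i \<ge> 1" for i using ws_basic(3)[OF M] m_def by simp
  define h where "h i s = indicator {(m i / u)..} s * (2 * sqrt (u / m i) * (sqrt s / s^2))" for i s
  define g where "g s = indicator {1..} s * ((ln 2 + 4 * sqrt u) * (sqrt s / s^2))" for s
  define F where "F s = indicator {1..} s * (assoc_fun_tilde M (u * s) / s^2)" for s
  have hnn: "h i s \<ge> 0" for i s
  proof (cases "s \<ge> m i / u")
    case True
    have "m i / u > 0" using u m1[of i] by simp
    then have "s > 0" using True by linarith
    then show ?thesis using u m1[of i] True by (simp add: h_def)
  qed (simp add: h_def)
  have gnn: "g s \<ge> 0" for s
  proof (cases "s \<ge> 1")
    case True
    have "ln 2 + 4 * sqrt u \<ge> 0" using u by (simp add: add_nonneg_nonneg)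
    then show ?thesis using True by (simp add: g_def)
  qed (simp add: g_def)
  have Fnn: "F s \<ge> 0" for s using omega_tilde_nonneg[OF M] by (simp add: F_def)
  have pw: "ennreal (F s) \<le> ennreal (g s) + (\<Sum>i. ennreal (h i s))" for s
  proof (cases "s \<ge> 1")
    case False then show ?thesis by (simp add: F_def)
  next
    case True
    then have s: "s > 0" by simp
    have us: "u * s > 0" using u s by simp
    define X where "X = (\<Sum>i. fterm M (u * s) i / s^2)"
    have sm: "summable (fterm M (u * s))" by (rule fterm_summable[OF M us])
    have "assoc_fun M (u * s) / s^2 \<le> suminf (fterm M (u * s)) / s^2"
      using omega_le_suminf[OF M us] by (simp add: divide_right_mono)
    also have "\<dots> = X" unfolding X_def by (rule suminf_divide[OF sm, symmetric])
    finally have oX: "assoc_fun M (u * s) / s^2 \<le> X" .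
    have lg: "ln (1 + (u * s)^2) / s^2 \<le> g s" using log_bound[OF u True] by (simp add: g_def)
    have "F s \<le> g s + X" using oX lg True
      by (simp add: F_def assoc_fun_tilde_def add_divide_distrib)
    then have "ennreal (F s) \<le> ennreal (g s + X)" by (rule ennreal_leI)
    also have "\<dots> = ennreal (g s) + ennreal X"
    proof (rule ennreal_plus)
      show "0 \<le> g s" by (rule gnn)
      show "0 \<le> X" unfolding X_def
        by (rule suminf_nonneg) (use summable_divide[OF sm] in \<open>auto simp: fterm_def\<close>)
    qed
    also have "ennreal X = (\<Sum>i. ennreal (fterm M (u * s) i / s^2))"
      unfolding X_def by (rule suminf_ennreal2[symmetric]) (use summable_divide[OF sm] in \<open>auto simp: fterm_def\<close>)
    also have "\<dots> \<le> (\<Sum>i. ennreal (h i s))"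
      by (intro suminf_le summableI ennreal_leI) (use fterm_bound[OF M u s] in \<open>simp add: h_def m_def\<close>)
    finally show ?thesis by simp
  qed
  have [measurable]: "(\<lambda>s. ennreal (h i s)) \<in> borel_measurable lborel" for i
    unfolding h_def by measurable
  have [measurable]: "(\<lambda>s. ennreal (g s)) \<in> borel_measurable lborel"
    unfolding g_def by measurable
  have Fm: "F \<in> borel_measurable lborel"
    unfolding F_def assoc_fun_tilde_def using M by measurable
  have hint: "(\<integral>\<^sup>+ s. ennreal (h i s) \<partial>lborel) = ennreal (4 * u * (1 / m i))" for i
  proof -
    have "(\<integral>\<^sup>+ s. ennreal (h i s) \<partial>lborel) = ennreal (2 * (2 * sqrt (u / m i)) / sqrt (m i / u))"
      unfolding h_def by (rule nn_tail) (use u m1[of i] in auto)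
    also have "2 * (2 * sqrt (u / m i)) / sqrt (m i / u) = 4 * u * (1 / m i)"
      using u m1[of i] by (simp add: real_sqrt_divide field_simps)
    finally show ?thesis .
  qed
  have gint: "(\<integral>\<^sup>+ s. ennreal (g s) \<partial>lborel) = ennreal (2 * (ln 2 + 4 * sqrt u) / sqrt 1)"
    unfolding g_def by (rule nn_tail) (use u in auto)
  have sumfin: "(\<Sum>i. ennreal (4 * u * (1 / m i))) = ennreal (\<Sum>i. 4 * u * (1 / m i))"
  proof (rule suminf_ennreal2)
    fix i show "0 \<le> 4 * u * (1 / m i)" using u m1[of i] by simp
  next
    show "summable (\<lambda>i. 4 * u * (1 / m i))"
      unfolding m_def by (rule summable_mult[OF nq_basic(2)[OF NQ]])
  qed
  have "(\<integral>\<^sup>+ s. ennreal (F s) \<partial>lborel) \<le> (\<integral>\<^sup>+ s. ennreal (g s) + (\<Sum>i. ennreal (h i s)) \<partial>lborel)"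
    by (intro nn_integral_mono pw)
  also have "\<dots> = (\<integral>\<^sup>+ s. ennreal (g s) \<partial>lborel) + (\<integral>\<^sup>+ s. (\<Sum>i. ennreal (h i s)) \<partial>lborel)"
    by (rule nn_integral_add) measurable
  also have "(\<integral>\<^sup>+ s. (\<Sum>i. ennreal (h i s)) \<partial>lborel) = (\<Sum>i. \<integral>\<^sup>+ s. ennreal (h i s) \<partial>lborel)"
    by (rule nn_integral_suminf) measurable
  also have "\<dots> = ennreal (\<Sum>i. 4 * u * (1 / m i))" unfolding hint sumfin ..
  also have "(\<integral>\<^sup>+ s. ennreal (g s) \<partial>lborel) + ennreal (\<Sum>i. 4 * u * (1 / m i)) < \<infinity>"
    unfolding gint by simp
  finally have "(\<integral>\<^sup>+ s. ennreal (F s) \<partial>lborel) < \<infinity>" .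
  then have "integrable lborel F" by (intro integrableI_nonneg Fm) (auto simp: Fnn)
  moreover have "F = (\<lambda>x. indicator {1..} x *\<^sub>R (assoc_fun_tilde M (u * x) / x^2))"
    by (simp add: F_def fun_eq_iff)
  ultimately show ?thesis by (simp add: set_integrable_def)
qed


lemma inv_sq:
  shows "set_integrable lborel {1..} (\<lambda>s::real. 1 / s^2)"
    and "(LINT s:{1..}|lborel. 1 / s^2) = (1::real)"
proof -
  have hi: "((\<lambda>x::real. 1 / x^2) has_integral 1) {1..}"
    using has_integral_inverse_power_to_inf[of 2 1] by simp
  have nn: "(\<integral>\<^sup>+ x. ennreal (indicator {1..} x * (1 / x^2)) \<partial>lborel) = ennreal 1"
    by (rule nn_integral_has_integral_lebesgue[OF _ hi]) simp
  have "integrable lborel (\<lambda>x::real. indicator {1..} x * (1 / x^2))"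
    by (rule integrableI_nonneg) (use nn in auto)
  then show si: "set_integrable lborel {1..} (\<lambda>s::real. 1 / s^2)"
    by (simp add: set_integrable_def)
  show "(LINT s:{1..}|lborel. 1 / s^2) = (1::real)"
    using set_borel_integral_eq_integral(2)[OF si] integral_unique[OF hi] by simp
qed

lemma kappa_nonneg:
  assumes "weight_seq M"
  shows "kappa (assoc_fun_tilde M) t \<ge> 0"
  unfolding kappa_def set_lebesgue_integral_def
  by (rule integral_nonneg_AE) (use omega_tilde_nonneg[OF assms] in \<open>auto simp: indicator_def\<close>)

lemma omega_tilde_mono:
  assumes "weight_seq M" "0 \<le> x" "x \<le> y"
  shows "assoc_fun_tilde M x \<le> assoc_fun_tilde M y"
proof -
  have "assoc_fun M x \<le> assoc_fun M y" using omega_mono[OF assms(1)] assms(3) by (simp add: mono_def)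
  moreover have "x^2 \<le> y^2" using assms by (simp add: power_mono)
  then have "ln (1 + x^2) \<le> ln (1 + y^2)" by (subst ln_le_cancel_iff) (auto intro: add_pos_nonneg)
  ultimately show ?thesis by (simp add: assoc_fun_tilde_def)
qed

lemma kappa_ge:
  assumes NQ: "nonquasianalytic_seq M" and t: "t \<ge> 0"
  shows "assoc_fun_tilde M t \<le> kappa (assoc_fun_tilde M) t"
proof -
  note M = nq_basic(1)[OF NQ]
  have "assoc_fun_tilde M t = (LINT s:{1..}|lborel. assoc_fun_tilde M t * (1 / s^2))"
    by (simp only: set_integral_mult_right inv_sq(2) mult_1_right)
  also have "\<dots> \<le> (LINT s:{1..}|lborel. assoc_fun_tilde M (t * s) / s^2)"
  proof (rule set_integral_mono)
    show "set_integrable lborel {1..} (\<lambda>s::real. assoc_fun_tilde M t * (1 / s^2))"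
      by (rule set_integrable_mult_right) (rule inv_sq(1))
    show "set_integrable lborel {1..} (\<lambda>s. assoc_fun_tilde M (t * s) / s^2)"
      by (rule kappa_integrable[OF NQ t])
    fix s :: real assume "s \<in> {1..}"
    then have s: "s \<ge> 1" by simp
    have "assoc_fun_tilde M t \<le> assoc_fun_tilde M (t * s)"
      using t s by (intro omega_tilde_mono[OF M t]) (simp add: mult_left_mono[of 1 s t, simplified])
    then show "assoc_fun_tilde M t * (1 / s^2) \<le> assoc_fun_tilde M (t * s) / s^2"
      by (simp add: divide_right_mono)
  qed
  finally show ?thesis by (simp add: kappa_def)
qed

lemma kappa_compare:
  assumes NQa: "nonquasianalytic_seq Ma" and NQb: "nonquasianalytic_seq Mb"
    and H: "H \<ge> 0" and t: "t \<ge> 0"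
    and pw: "\<And>x. x \<ge> 0 \<Longrightarrow> 2 * assoc_fun_tilde Mb x \<le> assoc_fun_tilde Ma (H * x) + c"
  shows "2 * kappa (assoc_fun_tilde Mb) t \<le> kappa (assoc_fun_tilde Ma) (H * t) + c"
proof -
  have ia: "set_integrable lborel {1..} (\<lambda>s. assoc_fun_tilde Ma ((H * t) * s) / s^2)"
    by (rule kappa_integrable[OF NQa]) (use H t in simp)
  have ib: "set_integrable lborel {1..} (\<lambda>s. assoc_fun_tilde Mb (t * s) / s^2)"
    by (rule kappa_integrable[OF NQb t])
  have ic: "set_integrable lborel {1..} (\<lambda>s::real. c * (1 / s^2))"
    by (rule set_integrable_mult_right) (rule inv_sq(1))
  have "2 * kappa (assoc_fun_tilde Mb) t = (LINT s:{1..}|lborel. 2 * (assoc_fun_tilde Mb (t * s) / s^2))"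
    by (simp only: kappa_def set_integral_mult_right)
  also have "\<dots> \<le> (LINT s:{1..}|lborel. assoc_fun_tilde Ma ((H * t) * s) / s^2 + c * (1 / s^2))"
  proof (rule set_integral_mono)
    show "set_integrable lborel {1..} (\<lambda>s. 2 * (assoc_fun_tilde Mb (t * s) / s^2))"
      by (rule set_integrable_mult_right) (rule ib)
    show "set_integrable lborel {1..} (\<lambda>s. assoc_fun_tilde Ma ((H * t) * s) / s^2 + c * (1 / s^2))"
      using ia ic by (rule set_integral_add(1))
    fix s :: real assume "s \<in> {1..}"
    then have s: "s \<ge> 1" by simp
    have "2 * assoc_fun_tilde Mb (t * s) \<le> assoc_fun_tilde Ma (H * (t * s)) + c"
      using pw[of "t * s"] t s by simp
    then have "2 * assoc_fun_tilde Mb (t * s) / s^2 \<le> (assoc_fun_tilde Ma ((H * t) * s) + c) / s^2"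
      by (simp add: divide_right_mono mult.assoc)
    then show "2 * (assoc_fun_tilde Mb (t * s) / s^2) \<le> assoc_fun_tilde Ma ((H * t) * s) / s^2 + c * (1 / s^2)"
      by (simp add: add_divide_distrib)
  qed
  also have "\<dots> = kappa (assoc_fun_tilde Ma) (H * t) + c"
    using set_integral_add(2)[OF ia ic] by (simp only: set_integral_mult_right inv_sq(2) kappa_def mult_1_right)
  finally show ?thesis .
qed


lemma M1_ge: "weight_seq M \<Longrightarrow> M 1 \<ge> 1"
  using ws_basic(8)[of M 0] ws_basic(3)[of M 1] ws_basic(6)[of M] by simp

lemma cond_from_moderate:
  assumes NQ: "nonquasianalytic_matrix MM" and RM: "R_moderate MM" and a: "a > 0"
  shows "\<exists>b>0. \<exists>H\<ge>1. \<forall>t\<ge>0. 2 * kappa_mat MM b t \<le> kappa_mat MM a (H * t) + H"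
proof -
  obtain b' C where b': "b' > 0" "C \<ge> 1" and mod1: "\<And>j k. MM a (j + k) \<le> C ^ (j + k) * MM b' j * MM b' k"
    using RM a unfolding R_moderate_def by blast
  obtain b C' where b: "b > 0" "C' \<ge> 1" and mod2: "\<And>j k. MM b' (j + k) \<le> C' ^ (j + k) * MM b j * MM b k"
    using RM b'(1) unfolding R_moderate_def by blast
  have nq: "nonquasianalytic_seq (MM x)" if "x > 0" for x
    using NQ that unfolding nonquasianalytic_matrix_def by blast
  note Wa = nq_basic(1)[OF nq[OF a]] and Wb' = nq_basic(1)[OF nq[OF b'(1)]] and Wb = nq_basic(1)[OF nq[OF b(1)]]
  define c0 where "c0 = ln 2 + 2 * ln (MM b 1)"
  have c0: "c0 \<ge> 0" using M1_ge[OF Wb] by (simp add: c0_def)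
  define H where "H = max (C * C') c0"
  have CC: "C * C' \<ge> 1" using b'(2) b(2) by (metis mult_mono' mult_1 zero_le_one order_trans)
  then have H1: "H \<ge> 1" by (simp add: H_def)
  have pw: "2 * assoc_fun_tilde (MM b) x \<le> assoc_fun_tilde (MM a) (H * x) + c0" if x: "x \<ge> 0" for x
  proof -
    have o1: "2 * assoc_fun (MM b) x \<le> assoc_fun (MM b') (C' * x)"
      by (rule omega_moderate[OF Wb' Wb b(2) mod2 x])
    have o2: "2 * assoc_fun (MM b') (C' * x) \<le> assoc_fun (MM a) (C * (C' * x))"
      by (rule omega_moderate[OF Wa Wb' b'(2) mod1]) (use x b(2) in simp)
    have "C * (C' * x) \<le> H * x" using x by (simp add: H_def mult.assoc[symmetric] mult_right_mono)
    then have o3: "assoc_fun (MM a) (C * (C' * x)) \<le> assoc_fun (MM a) (H * x)"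
      using omega_mono[OF Wa] by (simp add: mono_def)
    have o4: "ln (1 + x^2) \<le> 2 * assoc_fun (MM b) x + c0"
      using omega_log[OF Wb x] by (simp add: c0_def)
    have "x \<le> H * x" using mult_right_mono[OF H1 x] by simp
    then have "x^2 \<le> (H * x)^2" using x by (simp add: power_mono)
    then have o5: "ln (1 + x^2) \<le> ln (1 + (H * x)^2)" by (subst ln_le_cancel_iff) (auto intro: add_pos_nonneg)
    show ?thesis using o1 o2 o3 o4 o5 by (simp add: assoc_fun_tilde_def)
  qed
  have "2 * kappa_mat MM b t \<le> kappa_mat MM a (H * t) + H" if t: "t \<ge> 0" for t
  proof -
    have "2 * kappa_mat MM b t \<le> kappa_mat MM a (H * t) + c0"
      unfolding kappa_mat_def by (rule kappa_compare[OF nq[OF a] nq[OF b(1)] _ t pw]) (use H1 in auto)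
    then show ?thesis by (simp add: H_def)
  qed
  then show ?thesis using b(1) H1 by blast
qed

lemma young_basic:
  assumes NQ: "nonquasianalytic_seq M"
  defines "kn \<equiv> kappa_norm (assoc_fun_tilde M)"
  shows "bdd_above ((\<lambda>y. real j * y - kn (exp y)) ` {0..})"
    and "young_conj kn (real j) \<ge> 0"
    and "\<And>y. y \<ge> 0 \<Longrightarrow> real j * y - kn (exp y) \<le> young_conj kn (real j)"
    and "\<And>t. kn t \<ge> 0"
    and "\<And>t. t \<ge> 0 \<Longrightarrow> kn t \<le> kappa (assoc_fun_tilde M) t"
proof -
  note W = nq_basic(1)[OF NQ]
  let ?k = "kappa (assoc_fun_tilde M)"
  have kn1: "kn t \<ge> ?k t - ?k 1" for t by (simp add: kn_def kappa_norm_def)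
  show knn: "\<And>t. kn t \<ge> 0" by (simp add: kn_def kappa_norm_def)
  show "\<And>t. t \<ge> 0 \<Longrightarrow> kn t \<le> ?k t"
    using kappa_nonneg[OF W] by (simp add: kn_def kappa_norm_def)
  have bnd: "real j * y - kn (exp y) \<le> ln (M (Suc j)) + ?k 1" if y: "y \<ge> 0" for y
  proof -
    have "ln (exp y ^ Suc j * M 0 / M (Suc j)) \<le> assoc_fun M (exp y)" by (rule omega_ge[OF W]) simp
    moreover have "ln (exp y ^ Suc j * M 0 / M (Suc j)) = real (Suc j) * y - ln (M (Suc j))"
    proof -
      have "exp y ^ Suc j = exp (real (Suc j) * y)" by (rule exp_of_nat_mult[symmetric])
      then have "exp y ^ Suc j * M 0 / M (Suc j) = exp (real (Suc j) * y) / M (Suc j)"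
        using ws_basic(6)[OF W] by simp
      also have "ln \<dots> = real (Suc j) * y - ln (M (Suc j))"
        using ws_basic(5)[OF W, of "Suc j"] by (simp add: ln_div)
      finally show ?thesis .
    qed
    moreover have "assoc_fun M (exp y) \<le> assoc_fun_tilde M (exp y)" 
      by (simp add: assoc_fun_tilde_def)
    moreover have "assoc_fun_tilde M (exp y) \<le> ?k (exp y)" by (rule kappa_ge[OF NQ]) simp
    ultimately show ?thesis using kn1[of "exp y"] y by (simp add: algebra_simps)
  qed
  show bdd: "bdd_above ((\<lambda>y. real j * y - kn (exp y)) ` {0..})"
    using bnd by (intro bdd_aboveI2) auto
  show up: "\<And>y. y \<ge> 0 \<Longrightarrow> real j * y - kn (exp y) \<le> young_conj kn (real j)"
    unfolding young_conj_def by (rule cSUP_upper[OF _ bdd]) simp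
  have "kn (exp 0) = 0" by (simp add: kn_def kappa_norm_def)
  then show "young_conj kn (real j) \<ge> 0" using up[of 0] by simp
qed


lemma K_moderate:
  assumes NQ: "nonquasianalytic_matrix MM"
    and cond: "\<forall>a>0. \<exists>b>0. \<exists>H\<ge>1. \<forall>t\<ge>0. 2 * kappa_mat MM b t \<le> kappa_mat MM a (H * t) + H"
  shows "R_moderate (K_mat MM)"
  unfolding R_moderate_def
proof (intro allI impI)
  fix a :: real assume a: "a > 0"
  obtain b H where b: "b > 0" and H: "H \<ge> 1" and hc: "\<And>t. t \<ge> 0 \<Longrightarrow> 2 * kappa_mat MM b t \<le> kappa_mat MM a (H * t) + H"
    using cond a by blast
  have nq: "nonquasianalytic_seq (MM x)" if "x > 0" for x
    using NQ that unfolding nonquasianalytic_matrix_def by blast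
  note Wa = nq_basic(1)[OF nq[OF a]]
  define ka where "ka = kappa (assoc_fun_tilde (MM a))"
  define kb where "kb = kappa (assoc_fun_tilde (MM b))"
  define kna where "kna = kappa_norm (assoc_fun_tilde (MM a))"
  define knb where "knb = kappa_norm (assoc_fun_tilde (MM b))"
  note YA = young_basic[OF nq[OF a], folded kna_def ka_def]
  note YB = young_basic[OF nq[OF b], folded knb_def kb_def]
  have hc': "2 * kb t \<le> ka (H * t) + H" if "t \<ge> 0" for t
    using hc[OF that] by (simp add: ka_def kb_def kappa_mat_def)
  define h where "h = ln H"
  have h: "h \<ge> 0" "exp h = H" using H by (auto simp: h_def)
  define D where "D = H + ka 1"
  have ka1: "ka 1 \<ge> 0" unfolding ka_def by (rule kappa_nonneg[OF Wa])
  have D: "D \<ge> 0" using H ka1 by (simp add: D_def)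
  have kna_ge: "kna t \<ge> ka t - ka 1" for t by (simp add: kna_def ka_def kappa_norm_def)
  have key: "young_conj kna (real (j + k)) \<le> real (j + k) * h + young_conj knb (real j) + young_conj knb (real k) + D" for j k
    unfolding young_conj_def[of kna]
  proof (rule cSUP_least)
    show "{0::real..} \<noteq> {}" by auto
    fix y :: real assume "y \<in> {0..}"
    then have y: "y \<ge> 0" by simp
    have pj: "young_conj knb (real j) \<ge> 0" "young_conj knb (real k) \<ge> 0" using YB(2) by auto
    show "real (j + k) * y - kna (exp y) \<le> real (j + k) * h + young_conj knb (real j) + young_conj knb (real k) + D"
    proof (cases "y \<ge> h")
      case False
      have "real (j + k) * y \<le> real (j + k) * h" using False by (intro mult_left_mono) auto
      then show ?thesis using pj D YA(4)[of "exp y"] by linarith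
    next
      case True
      define z where "z = y - h"
      have z: "z \<ge> 0" using True z_def by simp
      have ey: "exp y = H * exp z" using h H by (simp add: z_def exp_diff)
      have "2 * kb (exp z) \<le> ka (H * exp z) + H" by (rule hc') simp
      then have k1: "kna (exp y) \<ge> 2 * kb (exp z) - H - ka 1" using kna_ge[of "exp y"] ey by simp
      have k2: "knb (exp z) \<le> kb (exp z)" by (rule YB(5)) simp
      have k3: "real j * z - knb (exp z) \<le> young_conj knb (real j)" by (rule YB(3)[OF z])
      have k4: "real k * z - knb (exp z) \<le> young_conj knb (real k)" by (rule YB(3)[OF z])
      have "real (j + k) * y = real (j + k) * h + real j * z + real k * z"
        by (simp add: z_def algebra_simps)
      then show ?thesis using k1 k2 k3 k4 by (simp add: D_def algebra_simps) linarith?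
    qed
  qed
  have zero: "young_conj kna 0 \<le> 0"
    unfolding young_conj_def
    by (rule cSUP_least) (use YA(4) in auto)
  define C where "C = H * exp D"
  have eD: "exp D \<ge> 1" using D by simp
  have C: "C \<ge> 1" unfolding C_def using mult_mono[OF H eD] H by simp
  have "MM' a (j + k) \<le> C ^ (j + k) * MM' b j * MM' b k"
    if "MM' = K_mat MM" for j k MM'
  proof (cases "j + k = 0")
    case True
    then have jk: "j = 0" "k = 0" by auto
    have "K_mat MM a 0 \<le> 1" using zero by (simp add: K_mat_def kna_def)
    moreover have "K_mat MM b 0 \<ge> 1" using YB(2)[of 0] by (simp add: K_mat_def knb_def)
    ultimately have "K_mat MM a 0 \<le> K_mat MM b 0 * K_mat MM b 0"
      using mult_mono[of 1 "K_mat MM b 0" 1 "K_mat MM b 0"] by linarith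
    then show ?thesis using that jk by simp
  next
    case False
    define n where "n = j + k"
    have "n \<ge> 1" using False n_def by linarith
    then have n: "real n \<ge> 1" by simp
    have "K_mat MM a (j + k) = exp (young_conj kna (real (j + k)))" by (simp add: K_mat_def kna_def)
    also have "\<dots> \<le> exp (real n * h + D + young_conj knb (real j) + young_conj knb (real k))"
      using key[of j k] by (simp add: n_def algebra_simps)
    also have "\<dots> \<le> exp (real n * h + real n * D + young_conj knb (real j) + young_conj knb (real k))"
      using mult_right_mono[OF n D] by simp
    also have "\<dots> = exp (real n * (h + D)) * K_mat MM b j * K_mat MM b k"
      by (simp add: K_mat_def knb_def exp_add[symmetric] algebra_simps)
    also have "exp (real n * (h + D)) = C ^ n"
    proof -
      have "exp (real n * (h + D)) = exp (h + D) ^ n" by (rule exp_of_nat_mult)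
      also have "exp (h + D) = C" by (simp add: C_def exp_add h(2))
      finally show ?thesis .
    qed
    finally show ?thesis using that n_def by simp
  qed
  then show "\<exists>b>0. \<exists>C\<ge>1. \<forall>j k. K_mat MM a (j + k) \<le> C ^ (j + k) * K_mat MM b j * K_mat MM b k"
    using b C by blast
qed

theorem lemma3p3:
  fixes MM :: "real \<Rightarrow> nat \<Rightarrow> real"
  assumes "nonquasianalytic_matrix MM"
    and "R_moderate MM"
  shows "R_moderate (K_mat MM)
    \<and> (R_moderate (K_mat MM) \<longleftrightarrow>
        (\<forall>a>0. \<exists>b>0. \<exists>H\<ge>1. \<forall>t\<ge>0. 2 * kappa_mat MM b t \<le> kappa_mat MM a (H * t) + H))
    \<and> (\<forall>a>0. \<exists>b>0. \<exists>H\<ge>1. \<forall>t\<ge>0. 2 * kappa_mat MM b t \<le> kappa_mat MM a (H * t) + H)"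
proof -
  have c: "\<forall>a>0. \<exists>b>0. \<exists>H\<ge>1. \<forall>t\<ge>0. 2 * kappa_mat MM b t \<le> kappa_mat MM a (H * t) + H"
    using cond_from_moderate[OF assms] by blast
  have k: "R_moderate (K_mat MM)" by (rule K_moderate[OF assms(1) c])
  show ?thesis using c k by blast
qed

end
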